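(* Let $(\mathcal{X},\rho)$ be a metric space, $\eta:\mathcal{X}\to\mathcal{Y}$ a function, and $x\in\mathcal{X}$. For any $0<r<\mathrm{margin}_\eta(x)/3$, the open ball $B(x,r)$ is mutually-labeling for $\eta$.
   Context: $\mathrm{margin}_\eta(x)=\inf\{\rho(x,x'):\eta(x')\ne\eta(x)\}$ (infimum of empty set $=+\infty$). A set $U$ is mutually-labeling for $\eta$ if $\mathrm{diam}(U)<\mathrm{margin}_\eta(x)$ for all $x\in U$, where $\mathrm{diam}(U)=\sup_{z,z'\in U}\rho(z,z')$. *)

theory Defs
  imports "HOL-Analysis.Analysis" "HOL-Library.Extended_Real"
begin

text \<open>margin, valued in extended reals so that the infimum of the empty set is +infinity.\<close>
definition margin :: "('a::metric_space \<Rightarrow> 'b) \<Rightarrow> 'a \<Rightarrow> ereal" where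
  "margin \<eta> x = (INF x'\<in>{x'. \<eta> x' \<noteq> \<eta> x}. ereal (dist x x'))"

definition diam_e :: "('a::metric_space) set \<Rightarrow> ereal" where
  "diam_e U = (SUP p\<in>U \<times> U. ereal (dist (fst p) (snd p)))"

definition mutually_labeling :: "('a::metric_space \<Rightarrow> 'b) \<Rightarrow> 'a set \<Rightarrow> bool" where
  "mutually_labeling \<eta> U \<longleftrightarrow> (\<forall>x\<in>U. diam_e U < margin \<eta> x)"

end

theory Submission
  imports Defs
begin

theorem lemma3:
  fixes \<eta> :: "'a::metric_space \<Rightarrow> 'b" and x :: 'a and r :: real
  assumes "0 < r" and "ereal r < margin \<eta> x / 3"
  shows "mutually_labeling \<eta> (ball x r)"
proof -
  have h3: "ereal (3 * r) < margin \<eta> x"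
  proof (cases "margin \<eta> x")
    case (real m) then show ?thesis using assms(2) by auto
  next
    case PInf then show ?thesis by simp
  next
    case MInf then show ?thesis using assms(2) by simp
  qed
  then obtain m :: real where m1: "3 * r < m" and m2: "ereal m < margin \<eta> x"
    using ereal_dense2 by (metis ereal_less(2) less_ereal.simps(1))
  have dx: "m \<le> dist x x'" if "\<eta> x' \<noteq> \<eta> x" for x'
  proof -
    have "margin \<eta> x \<le> ereal (dist x x')"
      unfolding margin_def using that by (auto intro: INF_lower)
    then show ?thesis using m2 by (metis ereal_less_eq(3) less_imp_le order_trans)
  qed
  have diam: "diam_e (ball x r) \<le> ereal (2 * r)"
    unfolding diam_e_def
  proof (rule SUP_least)
    fix p assume "p \<in> ball x r \<times> ball x r"
    then have "dist (fst p) (snd p) \<le> 2 * r"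
      using dist_triangle[of "fst p" "snd p" x] by (auto simp: dist_commute mem_Times_iff)
    then show "ereal (dist (fst p) (snd p)) \<le> ereal (2 * r)" by simp
  qed
  show ?thesis unfolding mutually_labeling_def
  proof
    fix y assume y: "y \<in> ball x r"
    have "ereal (m - dist x y) \<le> margin \<eta> y"
      unfolding margin_def
    proof (rule INF_greatest)
      fix x' assume "x' \<in> {x'. \<eta> x' \<noteq> \<eta> y}"
      then have ne: "\<eta> x' \<noteq> \<eta> y" by simp
      show "ereal (m - dist x y) \<le> ereal (dist y x')"
      proof (cases "\<eta> x' = \<eta> x")
        case True
        then have "m \<le> dist x y" using dx[of y] ne by auto
        then show ?thesis using zero_le_dist[of y x'] by (simp del: zero_le_dist)
      next
        case False
        then have "m \<le> dist x x'" using dx by auto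
        then show ?thesis using dist_triangle[of x x' y] by (simp add: dist_commute)
      qed
    qed
    moreover have "2 * r < m - dist x y" using y m1 by simp
    ultimately show "diam_e (ball x r) < margin \<eta> y" using diam
      by (meson ereal_less(3) le_less_trans not_le order_trans less_ereal.simps(1))
  qed
qed

end
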